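(* The memoized subtyping algorithm described in the context, run on input $(T,U)$, has worst-case time complexity at most $2^{O(n^2)}$, where $n = |T| + |U|$.
   Context: Session types are given by the grammar $T ::= \mathsf{end} \mid X \mid \mu X.T \mid {?}[T_1,\dots,T_n].S \mid {!}[T_1,\dots,T_n].S \mid \&\langle l_1:T_1,\dots,l_n:T_n\rangle \mid \oplus\langle l_1:T_1,\dots,l_n:T_n\rangle$ (input, output, branch, select); the inputs $T,U$ are closed types, types are identified up to $\alpha$-conversion and substitutions are capture-avoiding. The size $|T|$ is the number of constructors: $|\mathsf{end}| = |X| = 1$, $|\mu X.T| = 1 + |T|$, $|\&\langle l_i:T_i\rangle_{i}| = |\oplus\langle l_i:T_i\rangle_{i}| = 1 + \sum_{i} |T_i|$, $|{?}[T_1,\dots,T_n].S| = |{!}[T_1,\dots,T_n].S| = 1 + \sum_i|T_i| + |S|$. The algorithm is a recursive function $\mathrm{Subtype}(\Delta,\Sigma,T,U)$, where $\Sigma$ is a finite set of pairs $V\le W$ of types and $\Delta$ is either the value false or a set of judgements $\Sigma'\vdash T'\le U'$; it is called initially as $\mathrm{Subtype}(\emptyset,\emptyset,T,U)$, and $T$ is reported a subtype of $U$ iff the result is not false. It proceeds as follows: if $\Delta$ = false return false; if the judgement $\Sigma\vdash T\le U$ is already in $\Delta$ return $\Delta$; otherwise add $\Sigma \vdash T\le U$ to $\Delta$ and then: if $T\le U\in\Sigma$ return $\Delta$; else if $T=U=\mathsf{end}$ return $\Delta$; else if $T=\mu X.T'$ return $\mathrm{Subtype}(\Delta,\Sigma\cup\{T\le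 U\},T'[T/X],U)$; else if $U = \mu X.U'$ return $\mathrm{Subtype}(\Delta,\Sigma\cup\{T\le U\},T,U'[U/X])$; else if $T={?}[T_1,\dots,T_k].V$ and $U={?}[U_1,\dots,U_k].W$, set $\Delta\gets\mathrm{Subtype}(\Delta,\Sigma,T_i,U_i)$ for $i=1,\dots,k$ in turn and return $\mathrm{Subtype}(\Delta,\Sigma,V,W)$; else if $T={!}[T_1,\dots,T_k].V$ and $U={!}[U_1,\dots,U_k].W$, set $\Delta\gets\mathrm{Subtype}(\Delta,\Sigma,U_i,T_i)$ for $i=1,\dots,k$ in turn and return $\mathrm{Subtype}(\Delta,\Sigma,V,W)$; else if $T=\&\langle l_i:T_i\rangle_{1\le i\le m}$, $U=\&\langle l_i:U_i\rangle_{1\le i\le n}$ with $m\le n$, set $\Delta\gets\mathrm{Subtype}(\Delta,\Sigma,T_i,U_i)$ for $i=1,\dots,m$ and return $\Delta$; else if $T=\oplus\langle l_i:T_i\rangle_{1\le i\le n}$, $U=\oplus\langle l_i:U_i\rangle_{1\le i\le m}$ with $m\le n$, set $\Delta\gets\mathrm{Subtype}(\Delta,\Sigma,T_i,U_i)$ for $i=1,\dots,m$ and return $\Delta$; otherwise return false. *)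

theory Defs
  imports Main
begin

text \<open>Session types, with bound type variables represented by de Bruijn indices,
so that alpha-equivalent types are syntactically equal.  Labels are natural numbers.\<close>

type_synonym label = nat

datatype stype =
    End
  | Var nat
  | Mu stype
  | In "stype list" stype
  | Out "stype list" stype
  | Branch "(label \<times> stype) list"
  | Select "(label \<times> stype) list"

fun tsize :: "stype \<Rightarrow> nat" where
  "tsize End = 1"
| "tsize (Var i) = 1"
| "tsize (Mu t) = 1 + tsize t"
| "tsize (In ts s) = 1 + sum_list (map tsize ts) + tsize s"
| "tsize (Out ts s) = 1 + sum_list (map tsize ts) + tsize s"
| "tsize (Branch ls) = 1 + sum_list (map (\<lambda>p. tsize (snd p)) ls)"
| "tsize (Select ls) = 1 + sum_list (map (\<lambda>p. tsize (snd p)) ls)"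

fun closed_at :: "nat \<Rightarrow> stype \<Rightarrow> bool" where
  "closed_at k End = True"
| "closed_at k (Var i) = (i < k)"
| "closed_at k (Mu t) = closed_at (Suc k) t"
| "closed_at k (In ts s) = ((\<forall>t\<in>set ts. closed_at k t) \<and> closed_at k s)"
| "closed_at k (Out ts s) = ((\<forall>t\<in>set ts. closed_at k t) \<and> closed_at k s)"
| "closed_at k (Branch ls) = (\<forall>p\<in>set ls. closed_at k (snd p))"
| "closed_at k (Select ls) = (\<forall>p\<in>set ls. closed_at k (snd p))"

definition closed :: "stype \<Rightarrow> bool" where
  "closed t = closed_at 0 t"

fun lift :: "nat \<Rightarrow> stype \<Rightarrow> stype" where
  "lift k End = End"
| "lift k (Var i) = (if i < k then Var i else Var (Suc i))"
| "lift k (Mu t) = Mu (lift (Suc k) t)"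
| "lift k (In ts s) = In (map (lift k) ts) (lift k s)"
| "lift k (Out ts s) = Out (map (lift k) ts) (lift k s)"
| "lift k (Branch ls) = Branch (map (\<lambda>p. (fst p, lift k (snd p))) ls)"
| "lift k (Select ls) = Select (map (\<lambda>p. (fst p, lift k (snd p))) ls)"

fun subst :: "nat \<Rightarrow> stype \<Rightarrow> stype \<Rightarrow> stype" where
  "subst k u End = End"
| "subst k u (Var i) = (if i < k then Var i else if i = k then u else Var (i - 1))"
| "subst k u (Mu t) = Mu (subst (Suc k) (lift 0 u) t)"
| "subst k u (In ts s) = In (map (subst k u) ts) (subst k u s)"
| "subst k u (Out ts s) = Out (map (subst k u) ts) (subst k u s)"
| "subst k u (Branch ls) = Branch (map (\<lambda>p. (fst p, subst k u (snd p))) ls)"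
| "subst k u (Select ls) = Select (map (\<lambda>p. (fst p, subst k u (snd p))) ls)"

text \<open>The unfolding T'[T/X] of T = mu X. T' (here T = Mu body).\<close>
definition unfold :: "stype \<Rightarrow> stype" where
  "unfold body = subst 0 (Mu body) body"

text \<open>The sequence of recursive calls made by the structural cases
  (input, output, branch, select); None if no structural case applies.\<close>
fun children :: "stype \<Rightarrow> stype \<Rightarrow> (stype \<times> stype) list option" where
  "children (In Ts V) (In Us W) =
     (if length Ts = length Us then Some (zip Ts Us @ [(V, W)]) else None)"
| "children (Out Ts V) (Out Us W) =
     (if length Ts = length Us then Some (zip Us Ts @ [(V, W)]) else None)"
| "children (Branch ts) (Branch us) =
     (if length ts \<le> length us \<and> set (map fst ts) \<subseteq> set (map fst us)
      then Some (map (\<lambda>p. (snd p, the (map_of us (fst p)))) ts) else None)"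
| "children (Select ts) (Select us) =
     (if length us \<le> length ts \<and> set (map fst us) \<subseteq> set (map fst ts)
      then Some (map (\<lambda>p. (the (map_of ts (fst p)), snd p)) us) else None)"
| "children T U = None"

fun is_mu :: "stype \<Rightarrow> bool" where
  "is_mu (Mu t) = True"
| "is_mu _ = False"

type_synonym assm = "(stype \<times> stype) set"
type_synonym judg = "assm \<times> stype \<times> stype"
text \<open>Delta: None represents the value false, Some D a set of judgements.\<close>
type_synonym delta = "judg set option"

definition jsize :: "assm \<Rightarrow> stype \<Rightarrow> stype \<Rightarrow> nat" where
  "jsize S T U = tsize T + tsize U + (\<Sum>p\<in>S. tsize (fst p) + tsize (snd p))"

text \<open>Cost model for the local work of one call with Delta = Some D: the membership
  test of the judgement in D (naively, one comparison per element of D, each linear in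
  the judgement size), plus the remaining local work (set insertion, membership in Sigma,
  substitution, pattern matching), all bounded by this quantity.\<close>
definition call_cost :: "judg set \<Rightarrow> assm \<Rightarrow> stype \<Rightarrow> stype \<Rightarrow> nat" where
  "call_cost D S T U = (1 + card D) * (1 + jsize S T U)"

text \<open>Big-step semantics of Subtype(Delta, Sigma, T, U) with its total running time:
  sub D S T U D' k  means the call returns D' and takes time k (all nested calls included).
  subs runs a sequence of calls, threading Delta.\<close>
inductive sub :: "delta \<Rightarrow> assm \<Rightarrow> stype \<Rightarrow> stype \<Rightarrow> delta \<Rightarrow> nat \<Rightarrow> bool"
  and subs :: "delta \<Rightarrow> assm \<Rightarrow> (stype \<times> stype) list \<Rightarrow> delta \<Rightarrow> nat \<Rightarrow> bool"
where
  sub_false: "sub None S T U None 1"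
| sub_memo: "(S, T, U) \<in> D \<Longrightarrow> sub (Some D) S T U (Some D) (call_cost D S T U)"
| sub_assm: "(S, T, U) \<notin> D \<Longrightarrow> (T, U) \<in> S \<Longrightarrow>
    sub (Some D) S T U (Some (insert (S, T, U) D)) (call_cost D S T U)"
| sub_end: "(S, End, End) \<notin> D \<Longrightarrow> (End, End) \<notin> S \<Longrightarrow>
    sub (Some D) S End End (Some (insert (S, End, End) D)) (call_cost D S End End)"
| sub_muL: "(S, T, U) \<notin> D \<Longrightarrow> (T, U) \<notin> S \<Longrightarrow> T = Mu T' \<Longrightarrow>
    sub (Some (insert (S, T, U) D)) (insert (T, U) S) (unfold T') U D' k \<Longrightarrow>
    sub (Some D) S T U D' (call_cost D S T U + k)"
| sub_muR: "(S, T, U) \<notin> D \<Longrightarrow> (T, U) \<notin> S \<Longrightarrow> \<not> is_mu T \<Longrightarrow> U = Mu U' \<Longrightarrow>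
    sub (Some (insert (S, T, U) D)) (insert (T, U) S) T (unfold U') D' k \<Longrightarrow>
    sub (Some D) S T U D' (call_cost D S T U + k)"
| sub_struct: "(S, T, U) \<notin> D \<Longrightarrow> (T, U) \<notin> S \<Longrightarrow> children T U = Some ps \<Longrightarrow>
    subs (Some (insert (S, T, U) D)) S ps D' k \<Longrightarrow>
    sub (Some D) S T U D' (call_cost D S T U + k)"
| sub_fail: "(S, T, U) \<notin> D \<Longrightarrow> (T, U) \<notin> S \<Longrightarrow> \<not> (T = End \<and> U = End) \<Longrightarrow>
    \<not> is_mu T \<Longrightarrow> \<not> is_mu U \<Longrightarrow> children T U = None \<Longrightarrow>
    sub (Some D) S T U None (call_cost D S T U)"
| subs_nil: "subs D S [] D 0"
| subs_cons: "sub D S T U D1 k1 \<Longrightarrow> subs D1 S ps D2 k2 \<Longrightarrow>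
    subs D S ((T, U) # ps) D2 (k1 + k2)"

end

theory Submission
  imports Defs
begin

fun sa :: "nat \<Rightarrow> stype list \<Rightarrow> stype \<Rightarrow> stype" where
  "sa k env End = End"
| "sa k env (Var i) = (if i < k then Var i else if i - k < length env then env ! (i - k) else Var (i - length env))"
| "sa k env (Mu t) = Mu (sa (Suc k) env t)"
| "sa k env (In ts s) = In (map (sa k env) ts) (sa k env s)"
| "sa k env (Out ts s) = Out (map (sa k env) ts) (sa k env s)"
| "sa k env (Branch ls) = Branch (map (\<lambda>p. (fst p, sa k env (snd p))) ls)"
| "sa k env (Select ls) = Select (map (\<lambda>p. (fst p, sa k env (snd p))) ls)"

lemma closed_at_mono: "closed_at m t \<Longrightarrow> m \<le> k \<Longrightarrow> closed_at k t"
  by (induction t arbitrary: m k) fastforce+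

lemma lift_closed: "closed_at m t \<Longrightarrow> m \<le> k \<Longrightarrow> lift k t = t"
proof (induction t arbitrary: m k)
  case (In x1 t) then show ?case by (auto intro!: map_idI)
next
  case (Out x1 t) then show ?case by (auto intro!: map_idI)
next
  case (Branch x) then show ?case by (auto intro!: map_idI)
next
  case (Select x) then show ?case by (auto intro!: map_idI)
qed auto

lemma subst_closed: "closed_at k t \<Longrightarrow> subst k u t = t"
proof (induction t arbitrary: k u)
  case (In x1 t) then show ?case by (auto intro!: map_idI)
next
  case (Out x1 t) then show ?case by (auto intro!: map_idI)
next
  case (Branch x) then show ?case by (auto intro!: map_idI)
next
  case (Select x) then show ?case by (auto intro!: map_idI)
qed auto

lemma closed_sa: "closed_at (k + length env) t \<Longrightarrow> \<forall>e\<in>set env. closed e \<Longrightarrow> closed_at k (sa k env t)"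
proof (induction t arbitrary: k)
  case (Var i)
  then show ?case
    by (auto simp: closed_def intro: closed_at_mono)
qed auto

lemma subst_sa: "\<forall>e\<in>set env. closed e \<Longrightarrow> closed u \<Longrightarrow>
   subst k u (sa (Suc k) env t) = sa k (u # env) t"
proof (induction t arbitrary: k)
  case (Var i)
  show ?case
  proof (cases "i < k")
    case True then show ?thesis by simp
  next
    case False
    show ?thesis
    proof (cases "i = k")
      case True then show ?thesis by simp
    next
      case ne: False
      with False have gt: "i > k" by simp
      show ?thesis
      proof (cases "i - Suc k < length env")
        case True
        then have "env ! (i - Suc k) \<in> set env" by simp
        then have "closed_at k (env ! (i - Suc k))" using Var.prems
          by (auto simp: closed_def intro: closed_at_mono)
        moreover have "i - k = Suc (i - Suc k)" using gt by simp
        ultimately show ?thesis using True gt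
          by (simp add: subst_closed)
      next
        case False
        then show ?thesis using gt by auto
      qed
    qed
  qed
next
  case (Mu t)
  then show ?case using lift_closed[of 0 u 0] by (simp add: closed_def)
qed auto

lemma unfold_sa: "\<forall>e\<in>set env. closed e \<Longrightarrow> closed_at (length env) (Mu b) \<Longrightarrow>
  unfold (sa 1 env b) = sa 0 (Mu (sa 1 env b) # env) b"
proof -
  assume a: "\<forall>e\<in>set env. closed e" "closed_at (length env) (Mu b)"
  have "closed_at 0 (sa 0 env (Mu b))" using closed_sa[of 0 env "Mu b"] a by simp
  then have "closed (Mu (sa 1 env b))" by (simp add: closed_def)
  then show ?thesis using subst_sa[of env "Mu (sa 1 env b)" 0 b] a by (simp add: unfold_def)
qed

fun clist :: "stype list \<Rightarrow> stype \<Rightarrow> stype list" where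
  "clist env End = [sa 0 env End]"
| "clist env (Var i) = [sa 0 env (Var i)]"
| "clist env (Mu b) = sa 0 env (Mu b) # clist (sa 0 env (Mu b) # env) b"
| "clist env (In ts s) = sa 0 env (In ts s) # concat (map (clist env) ts) @ clist env s"
| "clist env (Out ts s) = sa 0 env (Out ts s) # concat (map (clist env) ts) @ clist env s"
| "clist env (Branch ls) = sa 0 env (Branch ls) # concat (map (\<lambda>p. clist env (snd p)) ls)"
| "clist env (Select ls) = sa 0 env (Select ls) # concat (map (\<lambda>p. clist env (snd p)) ls)"

lemma clist_hd: "sa 0 env t \<in> set (clist env t)"
  by (cases t) auto

lemma length_clist: "length (clist env t) = tsize t"
proof (induction env t rule: clist.induct)
  case (4 env ts s)
  have "sum_list (map (length \<circ> clist env) ts) = sum_list (map tsize ts)" using 4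
    by (intro arg_cong[where f=sum_list] map_cong) auto
  then show ?case using 4 by (simp add: length_concat)
next
  case (5 env ts s)
  have "sum_list (map (length \<circ> clist env) ts) = sum_list (map tsize ts)" using 5
    by (intro arg_cong[where f=sum_list] map_cong) auto
  then show ?case using 5 by (simp add: length_concat)
next
  case (6 env ls)
  have "sum_list (map (length \<circ> (\<lambda>p. clist env (snd p))) ls) = sum_list (map (\<lambda>p. tsize (snd p)) ls)" using 6
    by (intro arg_cong[where f=sum_list] map_cong) auto
  then show ?case using 6 by (simp add: length_concat o_def)
next
  case (7 env ls)
  have "sum_list (map (length \<circ> (\<lambda>p. clist env (snd p))) ls) = sum_list (map (\<lambda>p. tsize (snd p)) ls)" using 7
    by (intro arg_cong[where f=sum_list] map_cong) auto
  then show ?case using 7 by (simp add: length_concat o_def)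
qed auto

fun comps :: "stype \<Rightarrow> stype set" where
  "comps (Mu b) = {unfold b}"
| "comps (In ts s) = insert s (set ts)"
| "comps (Out ts s) = insert s (set ts)"
| "comps (Branch ls) = snd ` set ls"
| "comps (Select ls) = snd ` set ls"
| "comps End = {}"
| "comps (Var i) = {}"

lemma clist_closure:
  "\<forall>e\<in>set env. closed e \<and> comps e \<subseteq> G \<Longrightarrow> closed_at (length env) t \<Longrightarrow>
   set (clist env t) \<subseteq> G \<Longrightarrow> \<forall>x\<in>set (clist env t). closed x \<and> comps x \<subseteq> G"
proof (induction env t rule: clist.induct)
  case (1 env)
  then show ?case by (simp add: closed_def)
next
  case (2 env i)
  then show ?case by auto
next
  case (3 env b)
  let ?x = "sa 0 env (Mu b)"
  have cx: "closed ?x" using closed_sa[of 0 env "Mu b"] 3(2,3) by (simp add: closed_def)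
  have "unfold (sa 1 env b) = sa 0 (?x # env) b" using unfold_sa[of env b] 3(2,3) by simp
  then have "comps ?x \<subseteq> G" using 3(4) clist_hd[of "?x # env" b] by auto
  then have "\<forall>x\<in>set (clist (?x # env) b). closed x \<and> comps x \<subseteq> G"
    using 3 cx by auto
  then show ?case using cx \<open>comps ?x \<subseteq> G\<close> by simp
next
  case (4 env ts s)
  let ?x = "sa 0 env (In ts s)"
  have cx: "closed ?x" using closed_sa[of 0 env "In ts s"] 4(3,4) by (simp add: closed_def)
  have "sa 0 env t \<in> G" if "t \<in> set ts" for t using 4(5) clist_hd[of env t] that by auto
  moreover have "sa 0 env s \<in> G" using 4(5) clist_hd[of env s] by auto
  ultimately have "comps ?x \<subseteq> G" by auto
  moreover have "\<forall>x\<in>set (clist env s). closed x \<and> comps x \<subseteq> G"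
    using 4(2)[OF 4(3)] 4(4,5) by simp
  moreover have "\<forall>x\<in>set (clist env t). closed x \<and> comps x \<subseteq> G" if "t \<in> set ts" for t
    using 4(1)[OF that 4(3)] 4(4,5) that by auto
  ultimately show ?case using cx by auto
next
  case (5 env ts s)
  let ?x = "sa 0 env (Out ts s)"
  have cx: "closed ?x" using closed_sa[of 0 env "Out ts s"] 5(3,4) by (simp add: closed_def)
  have "sa 0 env t \<in> G" if "t \<in> set ts" for t using 5(5) clist_hd[of env t] that by auto
  moreover have "sa 0 env s \<in> G" using 5(5) clist_hd[of env s] by auto
  ultimately have "comps ?x \<subseteq> G" by auto
  moreover have "\<forall>x\<in>set (clist env s). closed x \<and> comps x \<subseteq> G"
    using 5(2)[OF 5(3)] 5(4,5) by simp
  moreover have "\<forall>x\<in>set (clist env t). closed x \<and> comps x \<subseteq> G" if "t \<in> set ts" for t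
    using 5(1)[OF that 5(3)] 5(4,5) that by auto
  ultimately show ?case using cx by auto
next
  case (6 env ls)
  let ?x = "sa 0 env (Branch ls)"
  have cx: "closed ?x" using closed_sa[of 0 env "Branch ls"] 6(2,3) by (simp add: closed_def)
  have "sa 0 env (snd p) \<in> G" if "p \<in> set ls" for p using 6(4) clist_hd[of env "snd p"] that by auto
  then have "comps ?x \<subseteq> G" by auto
  moreover have "\<forall>x\<in>set (clist env (snd p)). closed x \<and> comps x \<subseteq> G" if "p \<in> set ls" for p
    using 6(1)[OF that 6(2)] 6(3,4) that by auto
  ultimately show ?case using cx by auto
next
  case (7 env ls)
  let ?x = "sa 0 env (Select ls)"
  have cx: "closed ?x" using closed_sa[of 0 env "Select ls"] 7(2,3) by (simp add: closed_def)
  have "sa 0 env (snd p) \<in> G" if "p \<in> set ls" for p using 7(4) clist_hd[of env "snd p"] that by auto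
  then have "comps ?x \<subseteq> G" by auto
  moreover have "\<forall>x\<in>set (clist env (snd p)). closed x \<and> comps x \<subseteq> G" if "p \<in> set ls" for p
    using 7(1)[OF that 7(2)] 7(3,4) that by auto
  ultimately show ?case using cx by auto
qed

lemma tsize_pos: "1 \<le> tsize t"
  by (cases t) auto

lemma sum_list_ge_len: "(\<forall>x\<in>set xs. 1 \<le> f x) \<Longrightarrow> length xs \<le> sum_list (map f xs)"
  by (induction xs) (auto simp: add_mono)

lemma tsize_sa: "\<forall>e\<in>set env. tsize e \<le> B \<Longrightarrow> 1 \<le> B \<Longrightarrow> tsize (sa k env t) \<le> tsize t * B"
proof (induction t arbitrary: k)
  case (In ts s)
  have "sum_list (map (tsize \<circ> sa k env) ts) \<le> sum_list (map (\<lambda>t. tsize t * B) ts)"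
    using In by (intro sum_list_mono) auto
  also have "\<dots> = sum_list (map tsize ts) * B" by (simp add: sum_list_mult_const)
  finally show ?case using In.prems In.IH(2)[of k] by (simp add: algebra_simps)
next
  case (Out ts s)
  have "sum_list (map (tsize \<circ> sa k env) ts) \<le> sum_list (map (\<lambda>t. tsize t * B) ts)"
    using Out by (intro sum_list_mono) auto
  also have "\<dots> = sum_list (map tsize ts) * B" by (simp add: sum_list_mult_const)
  finally show ?case using Out.prems Out.IH(2)[of k] by (simp add: algebra_simps)
next
  case (Branch ls)
  have "sum_list (map (\<lambda>p. tsize (sa k env (snd p))) ls) \<le> sum_list (map (\<lambda>p. tsize (snd p) * B) ls)"
    using Branch by (intro sum_list_mono) auto
  also have "\<dots> = sum_list (map (\<lambda>p. tsize (snd p)) ls) * B" by (simp add: sum_list_mult_const)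
  finally show ?case using Branch by (simp add: algebra_simps o_def)
next
  case (Select ls)
  have "sum_list (map (\<lambda>p. tsize (sa k env (snd p))) ls) \<le> sum_list (map (\<lambda>p. tsize (snd p) * B) ls)"
    using Select by (intro sum_list_mono) auto
  also have "\<dots> = sum_list (map (\<lambda>p. tsize (snd p)) ls) * B" by (simp add: sum_list_mult_const)
  finally show ?case using Select by (simp add: algebra_simps o_def)
next
  case (Mu t)
  have "tsize (sa (Suc k) env t) \<le> tsize t * B" using Mu by blast
  then show ?case using Mu.prems by simp
qed auto

lemma pow_self_mono: "1 \<le> (a::nat) \<Longrightarrow> a \<le> b \<Longrightarrow> a ^ a \<le> b ^ b"
proof -
  assume "1 \<le> a" "a \<le> b"
  then have "a ^ a \<le> b ^ a" by (simp add: power_mono)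
  also have "\<dots> \<le> b ^ b" using \<open>1 \<le> a\<close> \<open>a \<le> b\<close> by (intro power_increasing) auto
  finally show ?thesis .
qed

lemma self_le_pow_self: "1 \<le> (a::nat) \<Longrightarrow> a \<le> a ^ a"
proof -
  assume "1 \<le> a"
  then have "a ^ 1 \<le> a ^ a" by (intro power_increasing) auto
  then show ?thesis by simp
qed

lemma mulpow: "1 \<le> (a::nat) \<Longrightarrow> a * B \<le> B * a ^ a"
  by (metis mult.commute mult_le_mono2 self_le_pow_self)

lemma le_sum_list_map: "x \<in> set xs \<Longrightarrow> (f x::nat) \<le> sum_list (map f xs)"
  by (induction xs) auto

lemma clist_size_aux:
  assumes env: "\<forall>e\<in>set env. tsize e \<le> B" and B: "1 \<le> B"
    and sub: "tsize t \<le> tsize t'"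
    and ih: "\<forall>x\<in>set (clist env t). tsize x \<le> B * tsize t ^ tsize t"
  shows "\<forall>x\<in>set (clist env t). tsize x \<le> B * tsize t' ^ tsize t'"
proof
  fix x assume "x \<in> set (clist env t)"
  then have "tsize x \<le> B * tsize t ^ tsize t" using ih by auto
  also have "\<dots> \<le> B * tsize t' ^ tsize t'" using sub tsize_pos[of t]
    by (intro mult_le_mono2 pow_self_mono) auto
  finally show "tsize x \<le> B * tsize t' ^ tsize t'" .
qed

lemma clist_size:
  "\<forall>e\<in>set env. tsize e \<le> B \<Longrightarrow> 1 \<le> B \<Longrightarrow> \<forall>x\<in>set (clist env t). tsize x \<le> B * tsize t ^ tsize t"
proof (induction env t arbitrary: B rule: clist.induct)
  case (3 env b)
  let ?x = "sa 0 env (Mu b)"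
  let ?B = "(1 + tsize b) * B"
  have hx: "tsize ?x \<le> ?B" using tsize_sa[of env B 0 "Mu b"] 3(2,3) by simp
  have "\<forall>e\<in>set (?x # env). tsize e \<le> ?B" using hx 3(2) by (auto intro: order_trans)
  moreover have "1 \<le> ?B" using 3(3) by simp
  ultimately have ih: "\<forall>x\<in>set (clist (?x # env) b). tsize x \<le> ?B * tsize b ^ tsize b" using 3(1) by blast
  have "?B * tsize b ^ tsize b \<le> B * (1 + tsize b) ^ (1 + tsize b)"
  proof -
    have "tsize b ^ tsize b \<le> (1 + tsize b) ^ tsize b" by (simp add: power_mono)
    then have "(1 + tsize b) * tsize b ^ tsize b \<le> (1 + tsize b) * (1 + tsize b) ^ tsize b" by (rule mult_le_mono2)
    then have "(1 + tsize b) * tsize b ^ tsize b \<le> (1 + tsize b) ^ (1 + tsize b)" by simp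
    then have "B * ((1 + tsize b) * tsize b ^ tsize b) \<le> B * (1 + tsize b) ^ (1 + tsize b)" by (rule mult_le_mono2)
    then show ?thesis by (metis mult.assoc mult.commute)
  qed
  moreover have "tsize ?x \<le> B * (1 + tsize b) ^ (1 + tsize b)"
  proof -
    have "(1 + tsize b) \<le> (1 + tsize b) ^ (1 + tsize b)" by (rule self_le_pow_self) simp
    then have "(1 + tsize b) * B \<le> B * (1 + tsize b) ^ (1 + tsize b)" by (metis mult.commute mult_le_mono2)
    then show ?thesis by (rule order_trans[OF hx])
  qed
  ultimately show ?case using ih by (auto intro: order_trans)
next
  case (4 env ts s)
  have hx: "tsize (sa 0 env (In ts s)) \<le> tsize (In ts s) * B" using tsize_sa 4(3,4) by blast
  also have "\<dots> \<le> B * tsize (In ts s) ^ tsize (In ts s)"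
    by (rule mulpow[OF tsize_pos])
  finally have h0: "tsize (sa 0 env (In ts s)) \<le> B * tsize (In ts s) ^ tsize (In ts s)" .
  have h1: "\<forall>x\<in>set (clist env s). tsize x \<le> B * tsize (In ts s) ^ tsize (In ts s)"
    by (rule clist_size_aux[OF 4(3,4)]) (use 4(2)[OF 4(3,4)] in auto)
  have h2: "\<forall>x\<in>set (clist env t). tsize x \<le> B * tsize (In ts s) ^ tsize (In ts s)" if "t \<in> set ts" for t
    by (rule clist_size_aux[OF 4(3,4)]) (use 4(1)[OF that 4(3,4)] le_sum_list_map[OF that, of tsize] in auto)
  show ?case using h0 h1 h2 by auto
next
  case (5 env ts s)
  have hx: "tsize (sa 0 env (Out ts s)) \<le> tsize (Out ts s) * B" using tsize_sa 5(3,4) by blast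
  also have "\<dots> \<le> B * tsize (Out ts s) ^ tsize (Out ts s)"
    by (rule mulpow[OF tsize_pos])
  finally have h0: "tsize (sa 0 env (Out ts s)) \<le> B * tsize (Out ts s) ^ tsize (Out ts s)" .
  have h1: "\<forall>x\<in>set (clist env s). tsize x \<le> B * tsize (Out ts s) ^ tsize (Out ts s)"
    by (rule clist_size_aux[OF 5(3,4)]) (use 5(2)[OF 5(3,4)] in auto)
  have h2: "\<forall>x\<in>set (clist env t). tsize x \<le> B * tsize (Out ts s) ^ tsize (Out ts s)" if "t \<in> set ts" for t
    by (rule clist_size_aux[OF 5(3,4)]) (use 5(1)[OF that 5(3,4)] le_sum_list_map[OF that, of tsize] in auto)
  show ?case using h0 h1 h2 by auto
next
  case (6 env ls)
  have hx: "tsize (sa 0 env (Branch ls)) \<le> tsize (Branch ls) * B" using tsize_sa 6(2,3) by blast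
  also have "\<dots> \<le> B * tsize (Branch ls) ^ tsize (Branch ls)"
    by (rule mulpow[OF tsize_pos])
  finally have h0: "tsize (sa 0 env (Branch ls)) \<le> B * tsize (Branch ls) ^ tsize (Branch ls)" .
  have h2: "\<forall>x\<in>set (clist env (snd p)). tsize x \<le> B * tsize (Branch ls) ^ tsize (Branch ls)" if "p \<in> set ls" for p
    by (rule clist_size_aux[OF 6(2,3)]) (use 6(1)[OF that 6(2,3)] le_sum_list_map[OF that, of "\<lambda>p. tsize (snd p)"] in auto)
  show ?case using h0 h2 by auto
next
  case (7 env ls)
  have hx: "tsize (sa 0 env (Select ls)) \<le> tsize (Select ls) * B" using tsize_sa 7(2,3) by blast
  also have "\<dots> \<le> B * tsize (Select ls) ^ tsize (Select ls)"
    by (rule mulpow[OF tsize_pos])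
  finally have h0: "tsize (sa 0 env (Select ls)) \<le> B * tsize (Select ls) ^ tsize (Select ls)" .
  have h2: "\<forall>x\<in>set (clist env (snd p)). tsize x \<le> B * tsize (Select ls) ^ tsize (Select ls)" if "p \<in> set ls" for p
    by (rule clist_size_aux[OF 7(2,3)]) (use 7(1)[OF that 7(2,3)] le_sum_list_map[OF that, of "\<lambda>p. tsize (snd p)"] in auto)
  show ?case using h0 h2 by auto
qed (auto split: if_splits)

lemma children_len: "children T U = Some ps \<Longrightarrow> length ps \<le> tsize T + tsize U"
proof (induction T U rule: children.induct)
  case (1 Ts V Us W)
  then show ?case using sum_list_ge_len[of Ts tsize] tsize_pos by (auto split: if_splits; meson subsetD)
next
  case (2 Ts V Us W)
  then show ?case using sum_list_ge_len[of Ts tsize] tsize_pos by (auto split: if_splits)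
next
  case (3 ts us)
  then show ?case using sum_list_ge_len[of ts "\<lambda>p. tsize (snd p)"] tsize_pos by (auto split: if_splits)
next
  case (4 ts us)
  then show ?case using sum_list_ge_len[of us "\<lambda>p. tsize (snd p)"] tsize_pos by (auto split: if_splits)
qed auto

lemma map_of_in: "l \<in> set (map fst us) \<Longrightarrow> the (map_of us l) \<in> snd ` set us"
proof -
  assume "l \<in> set (map fst us)"
  then obtain v where "map_of us l = Some v" by (metis map_of_eq_None_iff not_None_eq set_map)
  then show ?thesis by (auto dest: map_of_SomeD intro: rev_image_eqI)
qed

lemma zip_sub: "set (zip Ts Us) \<subseteq> set Ts \<times> set Us"
  using set_zip_leftD set_zip_rightD by fast

lemma children_in: "children T U = Some ps \<Longrightarrow> comps T \<subseteq> G \<Longrightarrow> comps U \<subseteq> G \<Longrightarrow> set ps \<subseteq> G \<times> G"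
proof (induction T U rule: children.induct)
  case (1 Ts V Us W)
  then have "ps = zip Ts Us @ [(V,W)]" "set Ts \<subseteq> G" "set Us \<subseteq> G" "V \<in> G" "W \<in> G"
    by (auto split: if_splits)
  then show ?case using zip_sub[of Ts Us] by auto
next
  case (2 Ts V Us W)
  then have "ps = zip Us Ts @ [(V,W)]" "set Ts \<subseteq> G" "set Us \<subseteq> G" "V \<in> G" "W \<in> G"
    by (auto split: if_splits)
  then show ?case using zip_sub[of Us Ts] by auto
next
  case (3 ts us)
  then have "ps = map (\<lambda>p. (snd p, the (map_of us (fst p)))) ts" "snd ` set ts \<subseteq> G" "snd ` set us \<subseteq> G"
     "set (map fst ts) \<subseteq> set (map fst us)"
    by (auto split: if_splits)
  note h = this
  show ?case
  proof
    fix x assume "x \<in> set ps"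
    then obtain p where p: "p \<in> set ts" "x = (snd p, the (map_of us (fst p)))" using h(1) by auto
    then have "fst p \<in> set (map fst us)" using h(4) by auto
    then have "the (map_of us (fst p)) \<in> G" using map_of_in[of "fst p" us] h(3) by blast
    then show "x \<in> G \<times> G" using p h(2) by auto
  qed
next
  case (4 ts us)
  then have "ps = map (\<lambda>p. (the (map_of ts (fst p)), snd p)) us" "snd ` set ts \<subseteq> G" "snd ` set us \<subseteq> G"
     "set (map fst us) \<subseteq> set (map fst ts)"
    by (auto split: if_splits)
  note h = this
  show ?case
  proof
    fix x assume "x \<in> set ps"
    then obtain p where p: "p \<in> set us" "x = (the (map_of ts (fst p)), snd p)" using h(1) by auto
    then have "fst p \<in> set (map fst ts)" using h(4) by auto
    then have "the (map_of ts (fst p)) \<in> G" using map_of_in[of "fst p" ts] h(2) by blast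
    then show "x \<in> G \<times> G" using p h(3) by auto
  qed
qed auto

definition phi :: "judg set \<Rightarrow> delta \<Rightarrow> nat" where
  "phi J \<Delta> = (case \<Delta> of None \<Rightarrow> 0 | Some D \<Rightarrow> card (J - D))"

lemma jsize_le:
  assumes fin: "finite G" and szb: "\<forall>x\<in>G. tsize x \<le> M"
    and S: "S \<subseteq> G \<times> G" and T: "T \<in> G" and U: "U \<in> G"
  shows "jsize S T U \<le> 2*M*(1 + card G * card G)"
proof -
  have "tsize (fst i) + tsize (snd i) \<le> 2 * M" if "i \<in> S" for i
  proof -
    have "fst i \<in> G" "snd i \<in> G" using S that by (auto simp: mem_Times_iff)
    then show ?thesis using szb by (simp add: add_mono mult_2)
  qed
  then have "(\<Sum>p\<in>S. tsize (fst p) + tsize (snd p)) \<le> card S * (2*M)"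
    using sum_bounded_above[of S "\<lambda>p. tsize (fst p) + tsize (snd p)" "2*M"] by simp
  also have "card S \<le> card G * card G"
    using card_mono[OF finite_cartesian_product[OF fin fin] S] by (simp add: card_cartesian_product)
  then have "card S * (2*M) \<le> card G * card G * (2*M)" by simp
  finally have "(\<Sum>p\<in>S. tsize (fst p) + tsize (snd p)) \<le> card G * card G * (2*M)" .
  moreover have "tsize T \<le> M" "tsize U \<le> M" using szb T U by auto
  ultimately show ?thesis unfolding jsize_def by (simp add: algebra_simps)
qed

lemma cc_le:
  assumes J: "J = Pow (G \<times> G) \<times> G \<times> G"
    and C0: "C0 = (1 + card J) * (1 + 2*M*(1 + card G * card G))"
    and fin: "finite G" and szb: "\<forall>x\<in>G. tsize x \<le> M"
    and D: "D \<subseteq> J" and S: "S \<subseteq> G \<times> G" and T: "T \<in> G" and U: "U \<in> G"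
  shows "call_cost D S T U \<le> C0"
proof -
  have "finite J" using J fin by simp
  then have "card D \<le> card J" using D card_mono by blast
  moreover have "jsize S T U \<le> 2*M*(1 + card G * card G)" using jsize_le fin szb S T U by blast
  ultimately show ?thesis unfolding call_cost_def C0 by (intro mult_le_mono) auto
qed

lemma arith1: "(cc::nat) \<le> C0 \<Longrightarrow> k + A*p' \<le> A*q + X \<Longrightarrow> q + 1 = r \<Longrightarrow> X \<le> A \<Longrightarrow> cc + k + A*p' \<le> A*r + C0"
proof -
  assume a: "cc \<le> C0" "k + A*p' \<le> A*q + X" "q + 1 = r" "X \<le> A"
  have "A * r = A * q + A" by (subst a(3)[symmetric]) simp
  then show ?thesis using a by linarith
qed

lemma amort:
  fixes G :: "stype set" and M :: nat and J :: "judg set" and C0 A :: nat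
  assumes J: "J = Pow (G \<times> G) \<times> G \<times> G"
    and C0: "C0 = (1 + card J) * (1 + 2*M*(1 + card G * card G))"
    and A: "A = C0 * (2*M + 1)"
    and fin: "finite G" and cl: "\<forall>x\<in>G. comps x \<subseteq> G" and szb: "\<forall>x\<in>G. tsize x \<le> M"
  shows "sub \<Delta> S T U \<Delta>' k \<Longrightarrow> S \<subseteq> G \<times> G \<Longrightarrow> T \<in> G \<Longrightarrow> U \<in> G \<Longrightarrow> (\<forall>D. \<Delta> = Some D \<longrightarrow> D \<subseteq> J) \<Longrightarrow>
     (\<forall>D'. \<Delta>' = Some D' \<longrightarrow> (\<exists>D. \<Delta> = Some D \<and> D \<subseteq> D' \<and> D' \<subseteq> J)) \<and> k + A * phi J \<Delta>' \<le> A * phi J \<Delta> + C0"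
  and "subs \<Delta> S ps \<Delta>' k \<Longrightarrow> S \<subseteq> G \<times> G \<Longrightarrow> set ps \<subseteq> G \<times> G \<Longrightarrow> (\<forall>D. \<Delta> = Some D \<longrightarrow> D \<subseteq> J) \<Longrightarrow>
     (\<forall>D'. \<Delta>' = Some D' \<longrightarrow> (\<exists>D. \<Delta> = Some D \<and> D \<subseteq> D' \<and> D' \<subseteq> J)) \<and> k + A * phi J \<Delta>' \<le> A * phi J \<Delta> + C0 * length ps"
proof (induction rule: sub_subs.inducts)
  case (sub_false S T U)
  have "1 \<le> C0" using C0 by simp
  then show ?case by (simp add: phi_def)
next
  case (sub_memo S T U D)
  have "call_cost D S T U \<le> C0" using cc_le[OF J C0 fin szb _ sub_memo.prems(1-3)] sub_memo.prems(4) by simp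
  then show ?case using sub_memo.prems(4) by (simp add: phi_def)
next
  case (sub_assm S T U D)
  have cc: "call_cost D S T U \<le> C0" using cc_le[OF J C0 fin szb _ sub_assm.prems(1-3)] sub_assm.prems(4) by simp
  have jJ: "(S, T, U) \<in> J" using sub_assm J by auto
  have "finite J" using J fin by simp
  then have "card (J - insert (S, T, U) D) \<le> card (J - D)" by (intro card_mono) auto
  then have "A * card (J - insert (S, T, U) D) \<le> A * card (J - D)" by (rule mult_le_mono2)
  then have "call_cost D S T U + A * card (J - insert (S, T, U) D) \<le> A * card (J - D) + C0" using cc by linarith
  then show ?case using sub_assm.prems(4) jJ by (auto simp: phi_def simp del: card_Diff_insert)
next
  case (sub_end S D)
  have cc: "call_cost D S End End \<le> C0" using cc_le[OF J C0 fin szb _ sub_end.prems(1-3)] sub_end.prems(4) by simp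
  have jJ: "(S, End, End) \<in> J" using sub_end J by auto
  have "finite J" using J fin by simp
  then have "card (J - insert (S, End, End) D) \<le> card (J - D)" by (intro card_mono) auto
  then have "A * card (J - insert (S, End, End) D) \<le> A * card (J - D)" by (rule mult_le_mono2)
  then have "call_cost D S End End + A * card (J - insert (S, End, End) D) \<le> A * card (J - D) + C0" using cc by linarith
  then show ?case using sub_end.prems(4) jJ by (auto simp: phi_def simp del: card_Diff_insert)
next
  case (sub_muL S T U D T' D' k)
  have D: "D \<subseteq> J" using sub_muL.prems(4) by simp
  have cc: "call_cost D S T U \<le> C0" by (rule cc_le[OF J C0 fin szb D sub_muL.prems(1-3)])
  have jJ: "(S, T, U) \<in> J" using sub_muL.prems(1-3) J by auto
  have nD: "(S, T, U) \<notin> D" using sub_muL.hyps(1) .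
  have finJ: "finite J" using J fin by simp
  have h1: "insert (T, U) S \<subseteq> G \<times> G" using sub_muL.prems(1-3) by auto
  have h2: "unfold T' \<in> G" using cl sub_muL.prems(2) sub_muL.hyps(3) by auto
  have h3: "\<forall>Da. Some (insert (S, T, U) D) = Some Da \<longrightarrow> Da \<subseteq> J" using D jJ by auto
  note ih = sub_muL.IH[OF h1 h2 sub_muL.prems(3) h3]
  have cd: "card (J - insert (S, T, U) D) + 1 = card (J - D)"
  proof -
    have e: "J - insert (S, T, U) D = (J - D) - {(S, T, U)}" by auto
    have m: "(S, T, U) \<in> J - D" using jJ nD by auto
    have "finite (J - D)" using finJ by simp
    then have "card (J - D) = Suc (card ((J - D) - {(S, T, U)}))" by (rule card.remove[OF _ m])
    then show ?thesis unfolding e by simp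
  qed
  have X: "C0 \<le> A" unfolding A by simp
  have "call_cost D S T U + k + A * phi J D' \<le> A * card (J - D) + C0"
    by (rule arith1[OF cc _ cd X]) (use ih in \<open>simp add: phi_def del: card_Diff_insert\<close>)
  then show ?case using ih by (auto simp: phi_def simp del: card_Diff_insert)
next
  case (sub_muR S T U D U' D' k)
  have D: "D \<subseteq> J" using sub_muR.prems(4) by simp
  have cc: "call_cost D S T U \<le> C0" by (rule cc_le[OF J C0 fin szb D sub_muR.prems(1-3)])
  have jJ: "(S, T, U) \<in> J" using sub_muR.prems(1-3) J by auto
  have nD: "(S, T, U) \<notin> D" using sub_muR.hyps(1) .
  have finJ: "finite J" using J fin by simp
  have h1: "insert (T, U) S \<subseteq> G \<times> G" using sub_muR.prems(1-3) by auto
  have h2: "unfold U' \<in> G" using cl sub_muR.prems(3) sub_muR.hyps(4) by auto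
  have h3: "\<forall>Da. Some (insert (S, T, U) D) = Some Da \<longrightarrow> Da \<subseteq> J" using D jJ by auto
  note ih = sub_muR.IH[OF h1 sub_muR.prems(2) h2 h3]
  have cd: "card (J - insert (S, T, U) D) + 1 = card (J - D)"
  proof -
    have e: "J - insert (S, T, U) D = (J - D) - {(S, T, U)}" by auto
    have m: "(S, T, U) \<in> J - D" using jJ nD by auto
    have "finite (J - D)" using finJ by simp
    then have "card (J - D) = Suc (card ((J - D) - {(S, T, U)}))" by (rule card.remove[OF _ m])
    then show ?thesis unfolding e by simp
  qed
  have X: "C0 \<le> A" unfolding A by simp
  have "call_cost D S T U + k + A * phi J D' \<le> A * card (J - D) + C0"
    by (rule arith1[OF cc _ cd X]) (use ih in \<open>simp add: phi_def del: card_Diff_insert\<close>)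
  then show ?case using ih by (auto simp: phi_def simp del: card_Diff_insert)
next
  case (sub_struct S T U D ps D' k)
  have D: "D \<subseteq> J" using sub_struct.prems(4) by simp
  have cc: "call_cost D S T U \<le> C0" by (rule cc_le[OF J C0 fin szb D sub_struct.prems(1-3)])
  have jJ: "(S, T, U) \<in> J" using sub_struct.prems(1-3) J by auto
  have nD: "(S, T, U) \<notin> D" using sub_struct.hyps(1) .
  have finJ: "finite J" using J fin by simp
  have h1: "set ps \<subseteq> G \<times> G" using children_in[OF sub_struct.hyps(3)] cl sub_struct.prems(2,3) by blast
  have h3: "\<forall>Da. Some (insert (S, T, U) D) = Some Da \<longrightarrow> Da \<subseteq> J" using D jJ by auto
  note ih = sub_struct.IH[OF sub_struct.prems(1) h1 h3]
  have cd: "card (J - insert (S, T, U) D) + 1 = card (J - D)"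
  proof -
    have e: "J - insert (S, T, U) D = (J - D) - {(S, T, U)}" by auto
    have m: "(S, T, U) \<in> J - D" using jJ nD by auto
    have "finite (J - D)" using finJ by simp
    then have "card (J - D) = Suc (card ((J - D) - {(S, T, U)}))" by (rule card.remove[OF _ m])
    then show ?thesis unfolding e by simp
  qed
  have "tsize T \<le> M" "tsize U \<le> M" using szb sub_struct.prems(2,3) by auto
  then have len: "length ps \<le> 2 * M" using children_len[OF sub_struct.hyps(3)] by linarith
  have "C0 * length ps \<le> C0 * (2 * M + 1)" using len by (intro mult_le_mono2) simp
  then have X: "C0 * length ps \<le> A" unfolding A .
  have "call_cost D S T U + k + A * phi J D' \<le> A * card (J - D) + C0"
    by (rule arith1[OF cc _ cd X]) (use ih in \<open>simp add: phi_def del: card_Diff_insert\<close>)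
  then show ?case using ih by (auto simp: phi_def simp del: card_Diff_insert)
next
  case (sub_fail S T U D)
  have "call_cost D S T U \<le> C0" using cc_le[OF J C0 fin szb _ sub_fail.prems(1-3)] sub_fail.prems(4) by simp
  then show ?case by (simp add: phi_def)
next
  case (subs_nil D S)
  then show ?case by auto
next
  case (subs_cons D S T U D1 k1 ps D2 k2)
  have tu: "T \<in> G" "U \<in> G" "set ps \<subseteq> G \<times> G" using subs_cons.prems(2) by auto
  note h1 = subs_cons.IH(1)[OF subs_cons.prems(1) tu(1,2) subs_cons.prems(3)]
  have d1: "\<forall>Da. D1 = Some Da \<longrightarrow> Da \<subseteq> J" using h1 by blast
  note h2 = subs_cons.IH(2)[OF subs_cons.prems(1) tu(3) d1]
  have "\<forall>D'. D2 = Some D' \<longrightarrow> (\<exists>Da. D = Some Da \<and> Da \<subseteq> D' \<and> D' \<subseteq> J)"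
  proof (intro allI impI)
    fix D' assume "D2 = Some D'"
    then obtain Db where "D1 = Some Db" "Db \<subseteq> D'" "D' \<subseteq> J" using h2 by blast
    then obtain Da where "D = Some Da" "Da \<subseteq> Db" using h1 by blast
    then show "\<exists>Da. D = Some Da \<and> Da \<subseteq> D' \<and> D' \<subseteq> J" using \<open>Db \<subseteq> D'\<close> \<open>D' \<subseteq> J\<close> by blast
  qed
  moreover have "k1 + k2 + A * phi J D2 \<le> A * phi J D + C0 * length ((T, U) # ps)"
    using conjunct2[OF h1] conjunct2[OF h2] by simp
  ultimately show ?case by (rule conjI)
qed

lemma ex_sub:
  assumes J: "J = Pow (G \<times> G) \<times> G \<times> G" and fin: "finite G" and cl: "\<forall>x\<in>G. comps x \<subseteq> G"
    and szb: "\<forall>x\<in>G. tsize x \<le> M"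
  shows "D \<subseteq> J \<Longrightarrow> S \<subseteq> G \<times> G \<Longrightarrow> T \<in> G \<Longrightarrow> U \<in> G \<Longrightarrow> \<exists>\<Delta>' k. sub (Some D) S T U \<Delta>' k"
proof (induction "card (J - D)" arbitrary: D S T U rule: less_induct)
  case less
  have finJ: "finite J" using J fin by simp
  have jJ: "(S, T, U) \<in> J" using less.prems J by auto
  have lt: "card (J - D1) < card (J - D)" if "insert (S, T, U) D \<subseteq> D1" "(S, T, U) \<notin> D" for D1
  proof (rule psubset_card_mono)
    show "finite (J - D)" using finJ by simp
    show "J - D1 \<subset> J - D" using that jJ by blast
  qed
  note mono = amort(1)[OF J refl refl fin cl szb]
  show ?case
  proof (cases "(S, T, U) \<in> D")
    case True
    then show ?thesis by (blast intro: sub_memo)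
  next
    case nD: False
    show ?thesis
    proof (cases "(T, U) \<in> S")
      case True
      then show ?thesis using nD by (blast intro: sub_assm)
    next
      case nS: False
      have D1: "insert (S, T, U) D \<subseteq> J" using jJ less.prems by auto
      show ?thesis
      proof (cases "T = End \<and> U = End")
        case True
        then show ?thesis using nD nS by (blast intro: sub_end)
      next
        case nE: False
        show ?thesis
        proof (cases "is_mu T")
          case True
          then obtain T' where T': "T = Mu T'" by (cases T) auto
          have "unfold T' \<in> G" using cl less.prems T' by auto
          moreover have "insert (T, U) S \<subseteq> G \<times> G" using less.prems by auto
          ultimately obtain D' k where "sub (Some (insert (S, T, U) D)) (insert (T, U) S) (unfold T') U D' k"
            using less.hyps[OF lt[OF subset_refl nD] D1 _ _ less.prems(4)] by blast
          then show ?thesis using nD nS T' by (blast intro: sub_muL)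
        next
          case nM: False
          show ?thesis
          proof (cases "is_mu U")
            case True
            then obtain U' where U': "U = Mu U'" by (cases U) auto
            have "unfold U' \<in> G" using cl less.prems U' by auto
            moreover have "insert (T, U) S \<subseteq> G \<times> G" using less.prems by auto
            ultimately obtain D' k where "sub (Some (insert (S, T, U) D)) (insert (T, U) S) T (unfold U') D' k"
              using less.hyps[OF lt[OF subset_refl nD] D1 _ less.prems(3)] by blast
            then show ?thesis using nD nS nM U' by (blast intro: sub_muR)
          next
            case nM2: False
            show ?thesis
            proof (cases "children T U")
              case None
              then show ?thesis using nD nS nE nM nM2 by (blast intro: sub_fail)
            next
              case (Some ps)
              have psG: "set ps \<subseteq> G \<times> G" using children_in[OF Some] cl less.prems by blast
              have "\<forall>\<Delta>. (\<Delta> = None \<or> (\<exists>D1. \<Delta> = Some D1 \<and> insert (S, T, U) D \<subseteq> D1 \<and> D1 \<subseteq> J)) \<longrightarrow>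
                        (\<exists>\<Delta>' k. subs \<Delta> S qs \<Delta>' k)" if "set qs \<subseteq> G \<times> G" for qs
                using that
              proof (induction qs)
                case Nil
                then show ?case by (blast intro: subs_nil)
              next
                case (Cons q qs)
                obtain a b where q: "q = (a, b)" by (cases q)
                have ab: "a \<in> G" "b \<in> G" using Cons.prems q by auto
                have ih: "\<forall>\<Delta>. (\<Delta> = None \<or> (\<exists>D1. \<Delta> = Some D1 \<and> insert (S, T, U) D \<subseteq> D1 \<and> D1 \<subseteq> J)) \<longrightarrow>
                        (\<exists>\<Delta>' k. subs \<Delta> S qs \<Delta>' k)" using Cons by auto
                show ?case
                proof (intro allI impI)
                  fix \<Delta> assume h: "\<Delta> = None \<or> (\<exists>D1. \<Delta> = Some D1 \<and> insert (S, T, U) D \<subseteq> D1 \<and> D1 \<subseteq> J)"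
                  then show "\<exists>\<Delta>' k. subs \<Delta> S (q # qs) \<Delta>' k"
                  proof
                    assume "\<Delta> = None"
                    have "\<exists>\<Delta>' k. subs None S qs \<Delta>' k" using ih[rule_format, of None] by simp
                    then obtain D2 k2 where "subs None S qs D2 k2" by blast
                    from subs_cons[OF sub_false this] show ?thesis using q \<open>\<Delta> = None\<close> by blast
                  next
                    assume "\<exists>D1. \<Delta> = Some D1 \<and> insert (S, T, U) D \<subseteq> D1 \<and> D1 \<subseteq> J"
                    then obtain D1 where D1: "\<Delta> = Some D1" "insert (S, T, U) D \<subseteq> D1" "D1 \<subseteq> J" by blast
                    obtain \<Delta>1 k1 where s1: "sub (Some D1) S a b \<Delta>1 k1"
                      using less.hyps[OF lt[OF D1(2) nD] D1(3) less.prems(2) ab] by blast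
                    have "\<forall>D'. \<Delta>1 = Some D' \<longrightarrow> (\<exists>Da. Some D1 = Some Da \<and> Da \<subseteq> D' \<and> D' \<subseteq> J)"
                    proof -
                      have "\<forall>D. Some D1 = Some D \<longrightarrow> D \<subseteq> J" using D1(3) by simp
                      from conjunct1[OF mono[OF s1 less.prems(2) ab this]] show ?thesis .
                    qed
                    then have "\<Delta>1 = None \<or> (\<exists>D2. \<Delta>1 = Some D2 \<and> insert (S, T, U) D \<subseteq> D2 \<and> D2 \<subseteq> J)"
                    proof (cases \<Delta>1)
                      case None then show ?thesis by simp
                    next
                      case (Some D2)
                      assume m: "\<forall>D'. \<Delta>1 = Some D' \<longrightarrow> (\<exists>Da. Some D1 = Some Da \<and> Da \<subseteq> D' \<and> D' \<subseteq> J)"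
                      then have "D1 \<subseteq> D2" "D2 \<subseteq> J" using Some by auto
                      then show ?thesis using Some D1(2) by blast
                    qed
                    then have "\<exists>\<Delta>' k. subs \<Delta>1 S qs \<Delta>' k" by (rule ih[rule_format])
                    then obtain D2 k2 where "subs \<Delta>1 S qs D2 k2" by blast
                    from subs_cons[OF s1 this] show ?thesis using q D1(1) by blast
                  qed
                qed
              qed
              note all = this[OF psG, rule_format, of "Some (insert (S, T, U) D)"]
              have "\<exists>\<Delta>' k. subs (Some (insert (S, T, U) D)) S ps \<Delta>' k" by (rule all) (use D1 in auto)
              then obtain D' k where "subs (Some (insert (S, T, U) D)) S ps D' k" by blast
              then show ?thesis using nD nS Some by (blast intro: sub_struct)
            qed
          qed
        qed
      qed
    qed
  qed
qed

lemma sa_nil: "sa k [] t = t"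
proof (induction t arbitrary: k)
  case (In x1 t) then show ?case by (auto intro!: map_idI)
next
  case (Out x1 t) then show ?case by (auto intro!: map_idI)
next
  case (Branch x) then show ?case by (auto intro!: map_idI)
next
  case (Select x) then show ?case by (auto intro!: map_idI)
qed auto

lemma final_arith:
  fixes g m K :: nat
  assumes gK: "g*g \<le> K" and mK: "m \<le> 2^K" and K1: "1 \<le> K"
  shows "((1 + 2^(g*g)*(g*g)) * (1 + 2*m*(1+g*g))) * (2*m+1) * (2^(g*g)*(g*g))
          + (1 + 2^(g*g)*(g*g)) * (1 + 2*m*(1+g*g)) \<le> 2^(16*K)"
proof -
  define P :: nat where "P = 2^K"
  have P1: "1 \<le> P" unfolding P_def by simp
  have KP: "Suc K \<le> P" unfolding P_def Suc_le_eq by (rule less_exp)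
  have "(2::nat)^(g*g) \<le> 2^K" using gK by (intro power_increasing) auto
  then have X: "2^(g*g)*(g*g) \<le> P*P" using gK KP unfolding P_def[symmetric]
    by (intro mult_le_mono) auto
  have PP1: "1 \<le> P*P" using P1 by simp
  have a1: "1 + 2^(g*g)*(g*g) \<le> 2*(P*P)" using X PP1 by linarith
  have "1 + g*g \<le> P" using gK KP by linarith
  then have "2*m*(1+g*g) \<le> 2*P*P" using mK unfolding P_def[symmetric] by (intro mult_le_mono) auto
  then have a2: "1 + 2*m*(1+g*g) \<le> 4*(P*P)" using PP1 by linarith
  have a3: "2*m+1 \<le> 4*P" using mK P1 unfolding P_def[symmetric] by linarith
  have C0: "(1 + 2^(g*g)*(g*g)) * (1 + 2*m*(1+g*g)) \<le> (2*(P*P)) * (4*(P*P))"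
    using a1 a2 by (rule mult_le_mono)
  have "((1 + 2^(g*g)*(g*g)) * (1 + 2*m*(1+g*g))) * (2*m+1) * (2^(g*g)*(g*g))
        \<le> ((2*(P*P)) * (4*(P*P))) * (4*P) * (P*P)"
    by (rule mult_le_mono[OF mult_le_mono[OF C0 a3] X])
  moreover have "(2*(P*P)) * (4*(P*P)) \<le> ((2*(P*P)) * (4*(P*P))) * (4*P) * (P*P)"
    using P1 by simp
  ultimately have "((1 + 2^(g*g)*(g*g)) * (1 + 2*m*(1+g*g))) * (2*m+1) * (2^(g*g)*(g*g))
          + (1 + 2^(g*g)*(g*g)) * (1 + 2*m*(1+g*g)) \<le> 2 * (((2*(P*P)) * (4*(P*P))) * (4*P) * (P*P))"
    using C0 by linarith
  also have "\<dots> = 2^6 * P^7" by (simp add: power_def numeral_eq_Suc algebra_simps)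
  also have "\<dots> = 2^(6 + 7*K)" unfolding P_def by (simp add: power_add power_mult[symmetric] mult.commute)
  also have "\<dots> \<le> 2^(16*K)" using K1 by (intro power_increasing) auto
  finally show ?thesis .
qed

lemma card_J: "finite G \<Longrightarrow> card (Pow (G \<times> G) \<times> G \<times> G) = 2^(card G * card G) * (card G * card G)"
  by (simp add: card_cartesian_product card_Pow)

theorem mainTheorem6:
  "\<exists>c::nat. \<forall>T U. closed T \<longrightarrow> closed U \<longrightarrow>
     (\<exists>D' k. sub (Some {}) {} T U D' k) \<and>
     (\<forall>D' k. sub (Some {}) {} T U D' k \<longrightarrow>
        k \<le> 2 ^ (c * (tsize T + tsize U)\<^sup>2))"
proof (intro exI[of _ 16] allI impI)
  fix T U assume cT: "closed T" and cU: "closed U"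
  define n where "n = tsize T + tsize U"
  define G where "G = set (clist [] T) \<union> set (clist [] U)"
  define J where "J = Pow (G \<times> G) \<times> G \<times> G"
  define M where "M = n ^ n"
  have fin: "finite G" unfolding G_def by simp
  have cardG: "card G \<le> n"
  proof -
    have "card G \<le> card (set (clist [] T)) + card (set (clist [] U))" unfolding G_def by (rule card_Un_le)
    also have "\<dots> \<le> length (clist [] T) + length (clist [] U)" by (intro add_mono card_length)
    finally show ?thesis by (simp add: length_clist n_def)
  qed
  have TG: "T \<in> G" using clist_hd[of "[]" T] unfolding G_def by (simp add: sa_nil)
  have UG: "U \<in> G" using clist_hd[of "[]" U] unfolding G_def by (simp add: sa_nil)
  have clT: "\<forall>x\<in>set (clist [] T). closed x \<and> comps x \<subseteq> G"
    by (rule clist_closure) (use cT in \<open>auto simp: closed_def G_def\<close>)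
  have clU: "\<forall>x\<in>set (clist [] U). closed x \<and> comps x \<subseteq> G"
    by (rule clist_closure) (use cU in \<open>auto simp: closed_def G_def\<close>)
  have cl: "\<forall>x\<in>G. comps x \<subseteq> G" using clT clU unfolding G_def by blast
  have n1: "1 \<le> n" unfolding n_def using tsize_pos[of T] by simp
  have szT: "\<forall>x\<in>set (clist [] T). tsize x \<le> 1 * tsize T ^ tsize T" by (rule clist_size) auto
  have szU: "\<forall>x\<in>set (clist [] U). tsize x \<le> 1 * tsize U ^ tsize U" by (rule clist_size) auto
  have "tsize T ^ tsize T \<le> M" unfolding M_def n_def using tsize_pos[of T] by (intro pow_self_mono) auto
  moreover have "tsize U ^ tsize U \<le> M" unfolding M_def n_def using tsize_pos[of U] by (intro pow_self_mono) auto
  ultimately have szb: "\<forall>x\<in>G. tsize x \<le> M" using szT szU unfolding G_def by fastforce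
  have J0: "{} \<subseteq> J" by simp
  show "(\<exists>D' k. sub (Some {}) {} T U D' k) \<and>
     (\<forall>D' k. sub (Some {}) {} T U D' k \<longrightarrow> k \<le> 2 ^ (16 * (tsize T + tsize U)\<^sup>2))"
  proof
    show "\<exists>D' k. sub (Some {}) {} T U D' k"
      by (rule ex_sub[OF J_def fin cl szb J0 _ TG UG]) simp
  next
    show "\<forall>D' k. sub (Some {}) {} T U D' k \<longrightarrow> k \<le> 2 ^ (16 * (tsize T + tsize U)\<^sup>2)"
    proof (intro allI impI)
      fix D' k assume s: "sub (Some {}) {} T U D' k"
      define C0 where "C0 = (1 + card J) * (1 + 2*M*(1 + card G * card G))"
      define A where "A = C0 * (2*M + 1)"
      have "k + A * phi J D' \<le> A * phi J (Some {}) + C0"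
        using amort(1)[OF J_def C0_def A_def fin cl szb s _ TG UG] by simp
      then have k1: "k \<le> A * card J + C0" by (simp add: phi_def)
      define K where "K = n^2"
      have gK: "card G * card G \<le> K" unfolding K_def power2_eq_square using cardG by (intro mult_le_mono)
      have MK: "M \<le> 2^K"
      proof -
        have "n \<le> 2^n" using less_exp[of n] by linarith
        then have "n^n \<le> (2^n)^n" by (rule power_mono) simp
        then show ?thesis unfolding M_def K_def by (simp add: power_mult[symmetric] power2_eq_square)
      qed
      have K1: "1 \<le> K" unfolding K_def using n1 by simp
      have "A * card J + C0 \<le> 2^(16*K)"
        using final_arith[OF gK MK K1] unfolding A_def C0_def card_J[OF fin, folded J_def] .
      then show "k \<le> 2 ^ (16 * (tsize T + tsize U)\<^sup>2)" using k1 unfolding K_def n_def by linarith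
    qed
  qed
qed


end
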